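(* Let $f\ge0$ be integrable on $[-\pi,\pi]$ with $\int_{-\pi}^{\pi} f>0$, and suppose the sequence $\{\sigma_n^2(f)\}_{n\in\mathbb{N}}$ is weakly varying, i.e. $\lim_{n\to\infty}\sigma_{n+1}^2(f)/\sigma_n^2(f)=1$. Let $g$ be a function of the form $$g(\lambda)=h(\lambda)\,|\lambda-\lambda_1|^{\alpha(1)}\cdots|\lambda-\lambda_r|^{\alpha(r)},$$ where $r\in\mathbb{N}$, $\lambda_1,\dots,\lambda_r\in[-\pi,\pi]$, $\alpha(1),\dots,\alpha(r)\ge0$, and $h$ is a measurable function on $[-\pi,\pi]$ which is bounded, continuous at $\lambda=0$, and has a positive lower bound. Then $$\lim_{n\to\infty}\frac{\sigma_n^2(fg)}{\sigma_n^2(f)}=g(0).$$ Moreover, if $g(0)>0$, then $$\lim_{n\to\infty}\frac{\sigma_n^2(fg)}{\mathrm{Var}_{fg}(\widehat m_f)}=1,\qquad\text{where }\ \mathrm{Var}_{fg}(\widehat m_f):=\int_{-\pi}^{\pi}|p_n(e^{i\lambda})|^2f(\lambda)g(\lambda)\,d\lambda .$$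
   Context: For a nonnegative integrable weight $w$ on $[-\pi,\pi]$ with $\int w>0$, $\sigma_n^2(w)=\min_{q\in\mathcal{Q}_n(1)}\int_{-\pi}^{\pi}|q(e^{i\lambda})|^2w(\lambda)\,d\lambda$, where $\mathcal{Q}_n(1)$ is the set of complex polynomials of degree at most $n$ with $q(1)=1$; this is the variance of the BLUE of the mean $m$ of $X(t)=m+Y(t)$ based on $X(0),\dots,X(n)$ when $Y$ has spectral density $w$. The minimizer $p_n=p_n(\cdot,f)\in\mathcal{Q}_n(1)$ for the weight $f$ is unique (the optimal polynomial); its coefficients are those of the BLUE $\widehat m_f$ computed under spectral density $f$, and $\mathrm{Var}_{fg}(\widehat m_f)$ is the variance of this estimator when the true spectral density is $fg$. *)

theory Defs
  imports "HOL-Analysis.Analysis" "HOL-Computational_Algebra.Polynomial"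
begin

definition qform :: "complex poly \<Rightarrow> (real \<Rightarrow> real) \<Rightarrow> real" where
  "qform q w = (LINT t:{-pi..pi}|lborel. (cmod (poly q (cis t)))^2 * w t)"

definition Qn1 :: "nat \<Rightarrow> complex poly set" where
  "Qn1 n = {q. degree q \<le> n \<and> poly q 1 = 1}"

definition sigma2 :: "(real \<Rightarrow> real) \<Rightarrow> nat \<Rightarrow> real" where
  "sigma2 w n = Inf ((\<lambda>q. qform q w) ` Qn1 n)"

definition optpoly :: "(real \<Rightarrow> real) \<Rightarrow> nat \<Rightarrow> complex poly" where
  "optpoly w n = (THE q. q \<in> Qn1 n \<and> qform q w = sigma2 w n)"

(* |x|^a with the convention 0^0 = 1 *)
definition rpow :: "real \<Rightarrow> real \<Rightarrow> real" where
  "rpow x a = (if a = 0 then 1 else x powr a)"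

end

theory Submission
  imports Defs
begin


definition sq :: "complex poly \<Rightarrow> real \<Rightarrow> real" where
  "sq q t = (cmod (poly q (cis t)))^2"

definition wt :: "(real \<Rightarrow> real) \<Rightarrow> bool" where
  "wt w \<longleftrightarrow> (\<forall>t\<in>{-pi..pi}. w t \<ge> 0) \<and> set_integrable lborel {-pi..pi} w"

lemma qform_sq: "qform q w = (LINT t:{-pi..pi}|lborel. sq q t * w t)"
  by (simp add: qform_def sq_def)

lemma sq_nonneg[simp]: "sq q t \<ge> 0"
  by (simp add: sq_def)

lemma sq_cont: "continuous_on UNIV (sq q)"
  unfolding sq_def by (intro continuous_intros)

lemma sq_mult: "sq (p * q) t = sq p t * sq q t"
  by (simp add: sq_def norm_mult power_mult_distrib)

lemma sq_smult: "sq (smult a q) t = (cmod a)^2 * sq q t"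
  by (simp add: sq_def norm_mult power_mult_distrib)

lemma bm_setm:
  fixes \<phi> :: "real \<Rightarrow> real"
  assumes "\<phi> \<in> borel_measurable borel"
  shows "set_borel_measurable lborel {-pi..pi} \<phi>"
  using assms unfolding set_borel_measurable_def
  by (intro borel_measurable_scaleR borel_measurable_indicator) auto

lemma cont_setm:
  assumes "continuous_on UNIV \<phi>"
  shows "set_borel_measurable lborel {-pi..pi} (\<phi> :: real \<Rightarrow> real)"
  by (rule bm_setm) (use assms borel_measurable_continuous_onI in blast)

lemma setint_setm:
  assumes "set_integrable lborel {-pi..pi} (w :: real \<Rightarrow> real)"
  shows "set_borel_measurable lborel {-pi..pi} w"
  using assms unfolding set_integrable_def set_borel_measurable_def by (rule borel_measurable_integrable)

lemma setm_mult:
  assumes "set_borel_measurable lborel {-pi..pi} (\<phi> :: real \<Rightarrow> real)"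
    "set_borel_measurable lborel {-pi..pi} w"
  shows "set_borel_measurable lborel {-pi..pi} (\<lambda>t. \<phi> t * w t)"
proof -
  have "(\<lambda>x. (indicator {-pi..pi} x *\<^sub>R \<phi> x) * (indicator {-pi..pi} x *\<^sub>R w x)) \<in> borel_measurable lborel"
    using assms unfolding set_borel_measurable_def by (rule borel_measurable_times)
  moreover have "(\<lambda>x. (indicator {-pi..pi} x *\<^sub>R \<phi> x) * (indicator {-pi..pi} x *\<^sub>R w x))
     = (\<lambda>x. indicator {-pi..pi} x *\<^sub>R (\<phi> x * w x))"
    by (auto simp: indicator_def)
  ultimately show ?thesis unfolding set_borel_measurable_def by simp
qed

lemma bint:
  assumes w: "set_integrable lborel {-pi..pi} w"
    and m: "set_borel_measurable lborel {-pi..pi} \<phi>"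
    and b: "\<forall>t\<in>{-pi..pi}. \<bar>\<phi> t\<bar> \<le> B"
  shows "set_integrable lborel {-pi..pi} (\<lambda>t. \<phi> t * w t :: real)"
proof (rule set_integrable_bound[of _ _ "\<lambda>t. B * \<bar>w t\<bar>"])
  show "set_integrable lborel {-pi..pi} (\<lambda>t. B * \<bar>w t\<bar>)"
    using w by (intro set_integrable_mult_right set_integrable_abs)
  show "set_borel_measurable lborel {-pi..pi} (\<lambda>t. \<phi> t * w t)"
    using m setint_setm[OF w] by (rule setm_mult)
  have B: "B \<ge> 0" using b[rule_format, of 0] by auto
  show "AE x in lborel. x \<in> {-pi..pi} \<longrightarrow> norm (\<phi> x * w x) \<le> norm (B * \<bar>w x\<bar>)"
    using b B by (auto simp: abs_mult intro!: mult_right_mono)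
qed

lemma poly_sum_n:
  fixes q :: "complex poly"
  assumes "degree q \<le> n"
  shows "poly q x = (\<Sum>i\<le>n. coeff q i * x ^ i)"
proof -
  have "poly q x = (\<Sum>i\<le>degree q. coeff q i * x ^ i)" by (rule poly_altdef)
  also have "\<dots> = (\<Sum>i\<le>n. coeff q i * x ^ i)"
    by (rule sum.mono_neutral_left) (use assms le_degree in auto)
  finally show ?thesis .
qed

definition cs :: "nat \<Rightarrow> complex poly \<Rightarrow> real" where
  "cs n q = (\<Sum>i\<le>n. cmod (coeff q i))"

lemma cs_nonneg: "cs n q \<ge> 0"
  by (simp add: cs_def sum_nonneg)

lemma poly_cis_bound:
  assumes "degree q \<le> n"
  shows "cmod (poly q (cis t)) \<le> cs n q"
proof -
  have "cmod (poly q (cis t)) = cmod (\<Sum>i\<le>n. coeff q i * cis t ^ i)"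
    using poly_sum_n[OF assms] by simp
  also have "\<dots> \<le> (\<Sum>i\<le>n. cmod (coeff q i * cis t ^ i))" by (rule norm_sum)
  also have "\<dots> = cs n q" by (simp add: cs_def norm_mult norm_power)
  finally show ?thesis .
qed

lemma sq_bound:
  assumes "degree q \<le> n"
  shows "sq q t \<le> (cs n q)^2"
  unfolding sq_def using poly_cis_bound[OF assms] by (intro power_mono) auto

lemma sq_bound': "\<exists>B. \<forall>t. \<bar>sq q t\<bar> \<le> B"
  using sq_bound[of q "degree q"] by auto

lemma qint:
  assumes "set_integrable lborel {-pi..pi} w"
  shows "set_integrable lborel {-pi..pi} (\<lambda>t. sq q t * w t)"
  using sq_bound' [of q] by (auto intro!: bint assms cont_setm sq_cont)

lemma qform_nonneg:
  assumes "wt w" shows "qform q w \<ge> 0"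
  unfolding qform_sq set_lebesgue_integral_def using assms unfolding wt_def
  by (intro Bochner_Integration.integral_nonneg) (auto simp: indicator_def)

lemma sigma_le:
  assumes "wt w" "q \<in> Qn1 n"
  shows "sigma2 w n \<le> qform q w"
  unfolding sigma2_def using assms qform_nonneg
  by (intro cInf_lower) (auto intro!: bdd_belowI[of _ 0])

lemma one_Qn1: "1 \<in> Qn1 n"
  by (simp add: Qn1_def)

lemma sigma_ge:
  assumes "\<And>q. q \<in> Qn1 n \<Longrightarrow> a \<le> qform q w"
  shows "a \<le> sigma2 w n"
  unfolding sigma2_def using assms one_Qn1
  by (intro cInf_greatest) auto

lemma sigma_nonneg: "wt w \<Longrightarrow> sigma2 w n \<ge> 0"
  by (rule sigma_ge) (rule qform_nonneg)

lemma sigma_approx: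
  assumes "wt w" "e > 0"
  shows "\<exists>q\<in>Qn1 n. qform q w < sigma2 w n + e"
proof -
  have "Inf ((\<lambda>q. qform q w) ` Qn1 n) < sigma2 w n + e" using assms unfolding sigma2_def by simp
  then show ?thesis
    using assms qform_nonneg one_Qn1
    by (subst (asm) cInf_less_iff) (auto intro!: bdd_belowI[of _ 0])
qed

lemma inj_cis: "inj_on cis {-pi<..pi}"
  by (metis Arg_cis inj_onI)

lemma qform_pos:
  assumes w: "wt w" and pos: "(LINT t:{-pi..pi}|lborel. w t) > 0" and q: "q \<noteq> 0"
  shows "qform q w > 0"
proof (rule ccontr)
  assume "\<not> qform q w > 0"
  then have z: "qform q w = 0" using qform_nonneg[OF w, of q] by simp
  have wi: "set_integrable lborel {-pi..pi} w" and wn: "\<forall>t\<in>{-pi..pi}. w t \<ge> 0" using w by (auto simp: wt_def)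
  have "integral\<^sup>L lborel (\<lambda>t. indicator {-pi..pi} t *\<^sub>R (sq q t * w t)) = 0"
    using z unfolding qform_sq set_lebesgue_integral_def .
  then have ae: "AE t in lborel. indicator {-pi..pi} t *\<^sub>R (sq q t * w t) = 0"
    using qint[OF wi, of q] wn unfolding set_integrable_def
    by (subst (asm) integral_nonneg_eq_0_iff_AE) (auto simp: indicator_def)
  define Z where "Z = cis -` {x. poly q x = 0} \<inter> {-pi<..pi}"
  have "finite Z" unfolding Z_def using poly_roots_finite[OF q] inj_cis by (rule finite_vimage_IntI)
  then have "insert (-pi) Z \<in> null_sets lborel" by (intro finite_imp_null_set_lborel) auto
  then have "AE t in lborel. t \<notin> insert (-pi) Z" by (rule AE_not_in)
  with ae have "AE t in lborel. indicator {-pi..pi} t *\<^sub>R w t = 0"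
  proof eventually_elim
    case (elim t)
    show ?case
    proof (cases "t \<in> {-pi..pi}")
      case True
      then have "t \<in> {-pi<..pi}" using elim by auto
      then have "poly q (cis t) \<noteq> 0" using elim by (auto simp: Z_def)
      then have "sq q t > 0" by (simp add: sq_def)
      then show ?thesis using elim True by simp
    qed simp
  qed
  then have "integral\<^sup>L lborel (\<lambda>t. indicator {-pi..pi} t *\<^sub>R w t) = 0"
    by (rule integral_eq_zero_AE)
  then show False using pos unfolding set_lebesgue_integral_def by simp
qed

lemma cs_diff_tri: "cs n p \<le> cs n q + cs n (p - q)"
proof -
  have "cs n p \<le> (\<Sum>i\<le>n. cmod (coeff q i) + cmod (coeff (p - q) i))"
    unfolding cs_def
  proof (intro sum_mono)
    fix i
    have "coeff p i = coeff q i + coeff (p - q) i" by simp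
    then show "cmod (coeff p i) \<le> cmod (coeff q i) + cmod (coeff (p - q) i)"
      by (metis norm_triangle_ineq)
  qed
  then show ?thesis by (simp add: cs_def sum.distrib)
qed

lemma cs_commute: "cs n (p - q) = cs n (q - p)"
proof -
  have "cmod (coeff (p - q) i) = cmod (coeff (q - p) i)" for i
    by (metis coeff_diff norm_minus_commute)
  then show ?thesis by (simp add: cs_def)
qed

lemma cs_smult: "cs n (smult a q) = cmod a * cs n q"
  by (simp add: cs_def norm_mult sum_distrib_left)

lemma cs_zero: "cs n 0 = 0" by (simp add: cs_def)

lemma degree_diff_n: fixes p q :: "complex poly" shows "degree p \<le> n \<Longrightarrow> degree q \<le> n \<Longrightarrow> degree (p - q) \<le> n"
  by (rule degree_diff_le)

lemma poly_one_bound: "degree q \<le> n \<Longrightarrow> cmod (poly q 1) \<le> cs n q"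
  using poly_cis_bound[of q n 0] by simp

lemma parallel: fixes a b :: complex shows "(cmod (a + b))^2 + (cmod (a - b))^2 = 2 * (cmod a)^2 + 2 * (cmod b)^2"
  unfolding cmod_power2 by (simp add: power2_eq_square algebra_simps)

lemma qform_int_const:
  assumes "set_integrable lborel {-pi..pi} w"
  shows "(LINT t:{-pi..pi}|lborel. (sq q t + K) * w t) = qform q w + K * (LINT t:{-pi..pi}|lborel. w t)"
proof -
  have "(LINT t:{-pi..pi}|lborel. (sq q t + K) * w t) = (LINT t:{-pi..pi}|lborel. sq q t * w t + K * w t)"
    by (simp add: algebra_simps)
  also have "\<dots> = qform q w + K * (LINT t:{-pi..pi}|lborel. w t)"
    using qint[OF assms] assms by (simp add: qform_sq set_integral_add)
  finally show ?thesis .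
qed

lemma qdiff:
  assumes w: "wt w" and p: "degree p \<le> n" and q: "degree q \<le> n"
  shows "qform p w \<le> qform q w + cs n (p - q) * (cs n p + cs n q) * (LINT t:{-pi..pi}|lborel. w t)"
proof -
  have wi: "set_integrable lborel {-pi..pi} w" and wn: "\<forall>t\<in>{-pi..pi}. w t \<ge> 0" using w by (auto simp: wt_def)
  define K where "K = cs n (p - q) * (cs n p + cs n q)"
  have pt: "sq p t \<le> sq q t + K" for t
  proof -
    let ?a = "cmod (poly p (cis t))" and ?b = "cmod (poly q (cis t))"
    have "?a - ?b \<le> cmod (poly p (cis t) - poly q (cis t))" by (rule norm_triangle_ineq2)
    also have "\<dots> = cmod (poly (p - q) (cis t))" by simp
    also have "\<dots> \<le> cs n (p - q)" by (rule poly_cis_bound[OF degree_diff_n[OF p q]])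
    finally have d: "?a - ?b \<le> cs n (p - q)" .
    have s: "?a + ?b \<le> cs n p + cs n q" by (rule add_mono[OF poly_cis_bound[OF p] poly_cis_bound[OF q]])
    have "sq p t - sq q t = (?a - ?b) * (?a + ?b)" by (simp add: sq_def power2_eq_square algebra_simps)
    also have "\<dots> \<le> K"
    proof (cases "?a - ?b \<ge> 0")
      case True
      then show ?thesis unfolding K_def using d s by (intro mult_mono) auto
    next
      case False
      then have "(?a - ?b) * (?a + ?b) \<le> 0" by (intro mult_nonpos_nonneg) auto
      also have "0 \<le> K" unfolding K_def using cs_nonneg by (intro mult_nonneg_nonneg add_nonneg_nonneg) auto
      finally show ?thesis .
    qed
    finally show ?thesis by simp
  qed
  have "qform p w \<le> (LINT t:{-pi..pi}|lborel. (sq q t + K) * w t)"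
    unfolding qform_sq
  proof (rule set_integral_mono)
    show "set_integrable lborel {-pi..pi} (\<lambda>t. sq p t * w t)" by (rule qint[OF wi])
    have "set_integrable lborel {-pi..pi} (\<lambda>t. sq q t * w t + K * w t)"
      using qint[OF wi] wi by (intro set_integral_add) auto
    then show "set_integrable lborel {-pi..pi} (\<lambda>t. (sq q t + K) * w t)" by (simp add: algebra_simps)
    show "sq p t * w t \<le> (sq q t + K) * w t" if "t \<in> {-pi..pi}" for t
      using pt[of t] wn that by (intro mult_right_mono) auto
  qed
  also have "\<dots> = qform q w + K * (LINT t:{-pi..pi}|lborel. w t)" by (rule qform_int_const[OF wi])
  finally show ?thesis unfolding K_def .
qed

lemma qform_tendsto:
  assumes w: "wt w" and deg: "\<And>m. degree (Q m) \<le> n" "degree q \<le> n"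
    and b: "\<And>m. cs n (Q m) \<le> B" and lim: "(\<lambda>m. cs n (Q m - q)) \<longlonglongrightarrow> 0"
  shows "(\<lambda>m. qform (Q m) w) \<longlonglongrightarrow> qform q w"
proof -
  define I where "I = (LINT t:{-pi..pi}|lborel. w t)"
  have I: "I \<ge> 0" unfolding I_def set_lebesgue_integral_def using w
    by (intro Bochner_Integration.integral_nonneg) (auto simp: wt_def indicator_def)
  have bd: "\<bar>qform (Q m) w - qform q w\<bar> \<le> cs n (Q m - q) * (B + cs n q) * I" for m
  proof -
    have 1: "qform (Q m) w \<le> qform q w + cs n (Q m - q) * (cs n (Q m) + cs n q) * I"
      unfolding I_def by (rule qdiff[OF w deg])
    have 2: "qform q w \<le> qform (Q m) w + cs n (q - Q m) * (cs n q + cs n (Q m)) * I"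
      unfolding I_def by (rule qdiff[OF w deg(2) deg(1)])
    have "cs n (Q m - q) * (cs n (Q m) + cs n q) * I \<le> cs n (Q m - q) * (B + cs n q) * I"
      using b[of m] cs_nonneg[of n "Q m - q"] I by (intro mult_right_mono mult_left_mono) auto
    moreover have 3: "qform q w \<le> qform (Q m) w + cs n (Q m - q) * (cs n (Q m) + cs n q) * I"
      using 2 cs_commute[of n q "Q m"] by (simp add: add.commute)
    ultimately show ?thesis using 1 unfolding abs_le_iff by linarith
  qed
  have "(\<lambda>m. cs n (Q m - q) * (B + cs n q) * I) \<longlonglongrightarrow> 0"
    using tendsto_mult[OF tendsto_mult[OF lim tendsto_const] tendsto_const, of "B + cs n q" I] by simp
  then have "(\<lambda>m. qform (Q m) w - qform q w) \<longlonglongrightarrow> 0"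
    by (rule Lim_null_comparison[rotated]) (use bd in \<open>auto intro!: always_eventually\<close>)
  then show ?thesis by (simp add: LIM_zero_iff)
qed



lemma extract_sub:
  fixes Q :: "nat \<Rightarrow> complex poly"
  assumes deg: "\<And>m. degree (Q m) \<le> n" and b: "\<And>m. cs n (Q m) \<le> B"
  shows "\<exists>r q. strict_mono r \<and> degree q \<le> n \<and> (\<lambda>m. cs n (Q (r m) - q)) \<longlonglongrightarrow> 0"
proof -
  have "\<forall>d\<subseteq>{..n}. \<exists>l::nat \<Rightarrow> complex. \<exists>r::nat\<Rightarrow>nat.
    strict_mono r \<and> (\<forall>e>0. eventually (\<lambda>m. \<forall>i\<in>d. dist (coeff (Q (r m)) i) (l i) < e) sequentially)"
  proof (rule compact_lemma_general[where unproj = "\<lambda>x. x" and f = "\<lambda>m. (\<lambda>k. coeff (Q m) k)" and proj = "\<lambda>x k. x k"])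
    show "finite {..n}" by simp
    fix k assume "k \<in> {..n}"
    have "cmod (coeff (Q m) k) \<le> B" for m
    proof -
      have "cmod (coeff (Q m) k) \<le> cs n (Q m)"
        unfolding cs_def using \<open>k \<in> {..n}\<close> by (intro member_le_sum) auto
      then show ?thesis using b[of m] by simp
    qed
    then show "bounded ((\<lambda>x. x k) ` range (\<lambda>m. (\<lambda>k. coeff (Q m) k)))" unfolding bounded_iff by auto
  qed auto
  then obtain l r where r: "strict_mono r"
    and ev: "\<forall>e>0. eventually (\<lambda>m. \<forall>i\<in>{..n}. dist (coeff (Q (r m)) i) (l i) < e) sequentially"
    by blast
  define q where "q = (\<Sum>k\<le>n. monom (l k) k)"
  have cq: "coeff q k = (if k \<le> n then l k else 0)" for k
    unfolding q_def by (simp add: coeff_sum)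
  have dq: "degree q \<le> n" by (rule degree_le) (simp add: cq)
  have lim_i: "(\<lambda>m. coeff (Q (r m)) i) \<longlonglongrightarrow> l i" if "i \<le> n" for i
    unfolding tendsto_iff
  proof (intro allI impI)
    fix e :: real assume "e > 0"
    with ev have "eventually (\<lambda>m. \<forall>i\<in>{..n}. dist (coeff (Q (r m)) i) (l i) < e) sequentially" by blast
    then show "eventually (\<lambda>m. dist (coeff (Q (r m)) i) (l i) < e) sequentially"
      by eventually_elim (use that in auto)
  qed
  have "(\<lambda>m. \<Sum>i\<le>n. dist (coeff (Q (r m)) i) (l i)) \<longlonglongrightarrow> (\<Sum>i\<le>n. dist (l i) (l i))"
    by (intro tendsto_sum tendsto_dist lim_i tendsto_const) auto
  moreover have "cs n (Q (r m) - q) = (\<Sum>i\<le>n. dist (coeff (Q (r m)) i) (l i))" for m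
    unfolding cs_def by (intro sum.cong refl) (simp add: cq dist_norm)
  ultimately have "(\<lambda>m. cs n (Q (r m) - q)) \<longlonglongrightarrow> 0" by simp
  with r dq show ?thesis by blast
qed

lemma qform_smult: "qform (smult a q) w = (cmod a)^2 * qform q w"
  unfolding qform_sq sq_smult by (simp add: mult.assoc)

lemma cs_pos_nonzero: "degree q \<le> n \<Longrightarrow> cs n q > 0 \<Longrightarrow> q \<noteq> 0"
  by (auto simp: cs_def)

lemma coercive:
  assumes w: "wt w" and pos: "(LINT t:{-pi..pi}|lborel. w t) > 0"
  shows "\<exists>c>0. \<forall>q. degree q \<le> n \<longrightarrow> c * (cs n q)^2 \<le> qform q w"
proof (rule ccontr)
  assume "\<not> ?thesis"
  then have "\<forall>m. \<exists>q. degree q \<le> n \<and> qform q w < (cs n q)^2 / real (Suc m)"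
    by (metis (no_types) divide_inverse inverse_positive_iff_positive linorder_not_le mult.commute of_nat_0_less_iff zero_less_Suc)
  then obtain Q where Q: "\<And>m. degree (Q m) \<le> n" "\<And>m. qform (Q m) w < (cs n (Q m))^2 / real (Suc m)"
    by metis
  have cpos: "cs n (Q m) > 0" for m
  proof -
    have "0 < (cs n (Q m))^2 / real (Suc m)" using Q(2)[of m] qform_nonneg[OF w, of "Q m"] by linarith
    then have "cs n (Q m) \<noteq> 0" by auto
    then show ?thesis using cs_nonneg[of n "Q m"] by linarith
  qed
  define P where "P m = smult (of_real (1 / cs n (Q m))) (Q m)" for m
  have degP: "degree (P m) \<le> n" for m using Q(1)[of m] by (simp add: P_def)
  have csP: "cs n (P m) = 1" for m using cpos[of m] by (simp add: P_def cs_smult norm_divide)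
  have qP: "qform (P m) w \<le> 1 / real (Suc m)" for m
  proof -
    have "qform (P m) w = qform (Q m) w / (cs n (Q m))^2"
      using cpos[of m] by (simp add: P_def qform_smult power2_eq_square norm_divide field_simps)
    also have "\<dots> \<le> 1 / real (Suc m)" using Q(2)[of m] cpos[of m] by (simp add: field_simps)
    finally show ?thesis .
  qed
  obtain r q where r: "strict_mono r" and dq: "degree q \<le> n" and lim: "(\<lambda>m. cs n (P (r m) - q)) \<longlonglongrightarrow> 0"
    using extract_sub[of P n 1, OF degP] csP by auto
  have "\<bar>1 - cs n q\<bar> \<le> cs n (P (r m) - q)" for m
    using cs_diff_tri[of n "P (r m)" q] cs_diff_tri[of n q "P (r m)"] cs_commute[of n q "P (r m)"] csP[of "r m"]
    by auto
  then have "\<bar>1 - cs n q\<bar> \<le> 0"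
    by (intro tendsto_le[OF _ lim tendsto_const]) auto
  then have "cs n q = 1" by simp
  then have qnz: "q \<noteq> 0" using dq cs_pos_nonzero by auto
  have t1: "(\<lambda>m. qform (P (r m)) w) \<longlonglongrightarrow> qform q w"
    by (rule qform_tendsto[OF w _ dq _ lim, of 1]) (auto simp: degP csP)
  have t2: "(\<lambda>m. 1 / real (Suc (r m))) \<longlonglongrightarrow> 0"
    by (rule LIMSEQ_subseq_LIMSEQ[OF _ r, unfolded comp_def]) (use LIMSEQ_inverse_real_of_nat in \<open>simp add: inverse_eq_divide\<close>)
  have "qform q w \<le> 0"
    by (rule tendsto_le[OF _ t2 t1]) (use qP in \<open>auto intro!: always_eventually\<close>)
  with qform_pos[OF w pos qnz] show False by simp
qed

lemma exists_min:
  assumes w: "wt w" and pos: "(LINT t:{-pi..pi}|lborel. w t) > 0"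
  shows "\<exists>p\<in>Qn1 n. qform p w = sigma2 w n"
proof -
  obtain c where c: "c > 0" "\<And>q. degree q \<le> n \<Longrightarrow> c * (cs n q)^2 \<le> qform q w"
    using coercive[OF w pos, of n] by blast
  have "\<forall>m. \<exists>q\<in>Qn1 n. qform q w < sigma2 w n + 1 / real (Suc m)"
    using sigma_approx[OF w] by simp
  then obtain Q where Q: "\<And>m. Q m \<in> Qn1 n" "\<And>m. qform (Q m) w < sigma2 w n + 1 / real (Suc m)"
    by metis
  have degQ: "degree (Q m) \<le> n" for m using Q(1)[of m] by (simp add: Qn1_def)
  define B where "B = sqrt ((sigma2 w n + 1) / c)"
  have bQ: "cs n (Q m) \<le> B" for m
  proof -
    have "c * (cs n (Q m))^2 \<le> sigma2 w n + 1"
    proof -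
      have "1 / real (Suc m) \<le> 1" by simp
      then show ?thesis using c(2)[OF degQ[of m]] Q(2)[of m] by linarith
    qed
    then have "(cs n (Q m))^2 \<le> (sigma2 w n + 1) / c" using c(1) by (simp add: field_simps)
    then have "sqrt ((cs n (Q m))^2) \<le> B" unfolding B_def by (rule real_sqrt_le_mono)
    then show ?thesis using cs_nonneg[of n "Q m"] by simp
  qed
  obtain r q where r: "strict_mono r" and dq: "degree q \<le> n" and lim: "(\<lambda>m. cs n (Q (r m) - q)) \<longlonglongrightarrow> 0"
    using extract_sub[of Q n B, OF degQ bQ] by auto
  have "cmod (1 - poly q 1) \<le> cs n (Q (r m) - q)" for m
  proof -
    have "poly (Q (r m)) 1 = 1" using Q(1)[of "r m"] by (simp add: Qn1_def)
    then show ?thesis using poly_one_bound[OF degree_diff_n[OF degQ[of "r m"] dq]] by simp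
  qed
  then have "cmod (1 - poly q 1) \<le> 0"
    by (intro tendsto_le[OF _ lim tendsto_const]) auto
  then have "poly q 1 = 1" by simp
  with dq have qQ: "q \<in> Qn1 n" by (simp add: Qn1_def)
  have t1: "(\<lambda>m. qform (Q (r m)) w) \<longlonglongrightarrow> qform q w"
    by (rule qform_tendsto[OF w _ dq _ lim, of B]) (auto simp: degQ bQ)
  have t2: "(\<lambda>m. sigma2 w n + 1 / real (Suc (r m))) \<longlonglongrightarrow> sigma2 w n + 0"
    by (intro tendsto_add tendsto_const LIMSEQ_subseq_LIMSEQ[OF _ r, unfolded comp_def])
       (use LIMSEQ_inverse_real_of_nat in \<open>simp add: inverse_eq_divide\<close>)
  have "qform q w \<le> sigma2 w n + 0"
    by (rule tendsto_le[OF _ t2 t1]) (use Q(2) less_imp_le in \<open>auto intro!: always_eventually\<close>)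
  with sigma_le[OF w qQ] have "qform q w = sigma2 w n" by simp
  with qQ show ?thesis by blast
qed

lemma unique_min:
  assumes w: "wt w" and pos: "(LINT t:{-pi..pi}|lborel. w t) > 0"
    and p1: "p1 \<in> Qn1 n" "qform p1 w = sigma2 w n"
    and p2: "p2 \<in> Qn1 n" "qform p2 w = sigma2 w n"
  shows "p1 = p2"
proof (rule ccontr)
  assume ne: "p1 \<noteq> p2"
  have wi: "set_integrable lborel {-pi..pi} w" using w by (simp add: wt_def)
  define m where "m = smult (1/2) (p1 + p2)"
  define d where "d = smult (1/2) (p1 - p2)"
  have mQ: "m \<in> Qn1 n" using p1 p2 unfolding m_def Qn1_def
    by (auto intro: order.trans[OF degree_add_le_max] simp: max_def)
  have pt: "sq m t + sq d t = (sq p1 t + sq p2 t) / 2" for t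
    using parallel[of "poly p1 (cis t)" "poly p2 (cis t)"]
    by (simp add: sq_def m_def d_def norm_mult power2_eq_square)
  have "qform m w + qform d w = (LINT t:{-pi..pi}|lborel. sq m t * w t + sq d t * w t)"
    unfolding qform_sq using qint[OF wi] by (simp add: set_integral_add)
  also have "\<dots> = (LINT t:{-pi..pi}|lborel. (1/2) * (sq p1 t * w t) + (1/2) * (sq p2 t * w t))"
    by (intro arg_cong[where f = "set_lebesgue_integral _ _"] ext) (simp only: distrib_right[symmetric] pt, simp add: algebra_simps)
  also have "\<dots> = (qform p1 w + qform p2 w) / 2"
    unfolding qform_sq using qint[OF wi] by (simp add: set_integral_add)
  finally have "qform m w + qform d w = sigma2 w n" using p1 p2 by simp
  moreover have "sigma2 w n \<le> qform m w" by (rule sigma_le[OF w mQ])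
  moreover have "d \<noteq> 0" using ne by (simp add: d_def)
  then have "qform d w > 0" by (rule qform_pos[OF w pos])
  ultimately show False by simp
qed

lemma optpoly_prop:
  assumes w: "wt w" and pos: "(LINT t:{-pi..pi}|lborel. w t) > 0"
  shows "optpoly w n \<in> Qn1 n \<and> qform (optpoly w n) w = sigma2 w n"
proof -
  obtain p where p: "p \<in> Qn1 n" "qform p w = sigma2 w n" using exists_min[OF w pos] by blast
  show ?thesis unfolding optpoly_def
  proof (rule theI[of _ p])
    show "p \<in> Qn1 n \<and> qform p w = sigma2 w n" using p by simp
    show "q = p" if "q \<in> Qn1 n \<and> qform q w = sigma2 w n" for q
      using unique_min[OF w pos _ _ p] that by blast
  qed
qed

lemma sigma_pos:
  assumes w: "wt w" and pos: "(LINT t:{-pi..pi}|lborel. w t) > 0"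
  shows "sigma2 w n > 0"
proof -
  have o: "optpoly w n \<in> Qn1 n" "qform (optpoly w n) w = sigma2 w n" using optpoly_prop[OF w pos] by auto
  have "optpoly w n \<noteq> 0" using o(1) by (auto simp: Qn1_def)
  from qform_pos[OF w pos this] o(2) show ?thesis by simp
qed



definition v1 :: "complex poly" where "v1 = [:1/2, 1/2:]"

lemma sq_v1: "sq v1 t = (1 + cos t) / 2"
proof -
  have "poly v1 (cis t) = Complex ((1 + cos t)/2) (sin t / 2)"
    by (simp add: v1_def complex_eq_iff cis.sel)
  then have "sq v1 t = ((1 + cos t)/2)^2 + (sin t / 2)^2"
    by (simp add: sq_def cmod_power2)
  also have "\<dots> = (1 + cos t) / 2"
  proof -
    have "(sin t)^2 = 1 - (cos t)^2" using sin_cos_squared_add[of t] by linarith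
    then show ?thesis by (simp add: power_divide power2_sum) (simp add: field_simps power2_eq_square)
  qed
  finally show ?thesis .
qed

lemma v1_Qn1: "v1 \<in> Qn1 1"
  by (simp add: v1_def Qn1_def)

lemma Qn1_mult: "p \<in> Qn1 n \<Longrightarrow> q \<in> Qn1 m \<Longrightarrow> p * q \<in> Qn1 (n + m)"
  unfolding Qn1_def by (auto intro: order.trans[OF degree_mult_le] add_mono)

lemma Qn1_power: "p \<in> Qn1 n \<Longrightarrow> p ^ m \<in> Qn1 (n * m)"
proof (induction m)
  case 0 then show ?case by (simp add: one_Qn1)
next
  case (Suc m)
  then have "p * p ^ m \<in> Qn1 (n + n * m)" by (intro Qn1_mult)
  then show ?case by simp
qed

lemma sq_power: "sq (p ^ m) t = (sq p t) ^ m"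
  by (induction m) (auto simp: sq_mult, simp add: sq_def)

lemma wt_mult:
  assumes f: "wt f" and gm: "set_borel_measurable lborel {-pi..pi} g"
    and gb: "\<forall>t\<in>{-pi..pi}. 0 \<le> g t \<and> g t \<le> M"
  shows "wt (\<lambda>t. f t * g t)"
proof -
  have fi: "set_integrable lborel {-pi..pi} f" and fn: "\<forall>t\<in>{-pi..pi}. f t \<ge> 0" using f by (auto simp: wt_def)
  have "set_integrable lborel {-pi..pi} (\<lambda>t. g t * f t)"
    by (rule bint[OF fi gm, of M]) (use gb in auto)
  then show ?thesis using fn gb unfolding wt_def by (auto simp: mult.commute)
qed

lemma cos_ge_delta:
  assumes "0 < d" "d \<le> pi" "t \<in> {-pi..pi}" "\<not> \<bar>t\<bar> < d"
  shows "cos t \<le> cos d"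
proof -
  have "cos t = cos \<bar>t\<bar>" by (simp add: abs_if)
  also have "\<dots> \<le> cos d" using assms by (intro cos_monotone_0_pi_le) auto
  finally show ?thesis .
qed

lemma stepB:
  assumes f: "wt f" "(LINT t:{-pi..pi}|lborel. f t) > 0"
    and gb: "\<forall>t\<in>{-pi..pi}. 0 \<le> g t \<and> g t \<le> M"
    and gm: "set_borel_measurable lborel {-pi..pi} g"
    and d: "0 < d" "d \<le> pi" and e: "e \<ge> 0"
    and gd: "\<forall>t\<in>{-pi..pi}. \<bar>t\<bar> < d \<longrightarrow> g t \<le> g 0 + e"
  shows "qform (optpoly f n) (\<lambda>t. f t * g t)
     \<le> (g 0 + e) * sigma2 f n + (M / ((1 - cos d)/2)) * (sigma2 f n - sigma2 f (Suc n))"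
proof -
  define p where "p = optpoly f n"
  have p: "p \<in> Qn1 n" "qform p f = sigma2 f n" using optpoly_prop[OF f] by (auto simp: p_def)
  have pv: "p * v1 \<in> Qn1 (Suc n)" using Qn1_mult[OF p(1) v1_Qn1] by simp
  have s1: "sigma2 f (Suc n) \<le> qform (p * v1) f" by (rule sigma_le[OF f(1) pv])
  have fi: "set_integrable lborel {-pi..pi} f" and fn: "\<forall>t\<in>{-pi..pi}. f t \<ge> 0" using f by (auto simp: wt_def)
  have wfg: "wt (\<lambda>t. f t * g t)" by (rule wt_mult[OF f(1) gm gb])
  have g0: "g 0 \<ge> 0" using gb by auto
  define sd where "sd = (1 - cos d) / 2"
  have cd: "cos d < 1"
  proof -
    have "cos d < cos 0" using d by (intro cos_monotone_0_pi) auto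
    then show ?thesis by simp
  qed
  have sd: "sd > 0" using cd by (simp add: sd_def)
  have M0: "M \<ge> 0" using gb[rule_format, of 0] by auto
  define K where "K = M / sd"
  have K0: "K \<ge> 0" using M0 sd by (simp add: K_def)
  have pt: "sq p t * (f t * g t) \<le> (g 0 + e) * (sq p t * f t) + K * (sq p t * f t) - K * (sq (p * v1) t * f t)"
    if t: "t \<in> {-pi..pi}" for t
  proof -
    have eq: "K * (sq p t * f t) - K * (sq (p * v1) t * f t) = (K * ((1 - cos t)/2)) * (sq p t * f t)"
      by (simp add: sq_mult sq_v1 algebra_simps add_divide_distrib diff_divide_distrib)
    have nn: "sq p t * f t \<ge> 0" using fn t by simp
    have c1: "0 \<le> 1 - cos t" by simp
    show ?thesis
    proof (cases "\<bar>t\<bar> < d")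
      case True
      then have "g t \<le> g 0 + e" using gd t by auto
      then have "g t * (sq p t * f t) \<le> (g 0 + e) * (sq p t * f t)" by (rule mult_right_mono[OF _ nn])
      then have "sq p t * f t * g t \<le> (g 0 + e) * (sq p t * f t)" by (metis mult.commute)
      moreover have "0 \<le> (K * ((1 - cos t)/2)) * (sq p t * f t)" using K0 c1 nn by simp
      ultimately show ?thesis using eq by (simp add: algebra_simps)
    next
      case False
      then have "cos t \<le> cos d" using cos_ge_delta[OF d t] by simp
      then have "sd \<le> (1 - cos t)/2" by (simp add: sd_def)
      then have "M / sd * sd \<le> M / sd * ((1 - cos t)/2)" using sd M0 by (intro mult_left_mono) auto
      then have "M \<le> K * ((1 - cos t)/2)" using sd unfolding K_def by simp
      then have "g t \<le> K * ((1 - cos t)/2)" using gb t by force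
      then have "g t * (sq p t * f t) \<le> (K * ((1 - cos t)/2)) * (sq p t * f t)" by (rule mult_right_mono[OF _ nn])
      then have "sq p t * f t * g t \<le> (K * ((1 - cos t)/2)) * (sq p t * f t)" by (metis mult.commute)
      moreover have "0 \<le> (g 0 + e) * (sq p t * f t)" using g0 e nn by simp
      ultimately show ?thesis using eq by (simp add: algebra_simps)
    qed
  qed
  have i1: "set_integrable lborel {-pi..pi} (\<lambda>t. sq p t * f t)" by (rule qint[OF fi])
  have i2: "set_integrable lborel {-pi..pi} (\<lambda>t. sq (p * v1) t * f t)" by (rule qint[OF fi])
  have "qform p (\<lambda>t. f t * g t) \<le> (LINT t:{-pi..pi}|lborel. (g 0 + e) * (sq p t * f t) + K * (sq p t * f t) - K * (sq (p * v1) t * f t))"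
    unfolding qform_sq
    by (rule set_integral_mono[OF qint]) (use wfg pt i1 i2 in \<open>auto simp: wt_def\<close>)
  also have "\<dots> = (g 0 + e) * qform p f + K * qform p f - K * qform (p * v1) f"
    unfolding qform_sq using i1 i2 by (simp add: set_integral_add set_integral_diff)
  also have "\<dots> \<le> (g 0 + e) * sigma2 f n + K * (sigma2 f n - sigma2 f (Suc n))"
    using p(2) s1 K0 by (simp add: algebra_simps mult_left_mono)
  finally show ?thesis unfolding p_def K_def sd_def .
qed

lemma sq_v1_bounds: "0 \<le> sq v1 t" "sq v1 t \<le> 1"
proof -
  have a: "-1 \<le> cos t" "cos t \<le> 1" by simp_all
  have b: "0 \<le> 1 + cos t" "1 + cos t \<le> 2" using a by linarith+
  show "0 \<le> sq v1 t" unfolding sq_v1 using b(1) by simp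
  show "sq v1 t \<le> 1" unfolding sq_v1 using b(2) by simp
qed

lemma stepC:
  assumes f: "wt f" and gb: "\<forall>t\<in>{-pi..pi}. 0 \<le> g t \<and> g t \<le> M"
    and gm: "set_borel_measurable lborel {-pi..pi} g"
    and u: "u \<in> Qn1 K" "C > 0" "\<forall>t\<in>{-pi..pi}. sq u t \<le> C * g t"
    and eps: "0 < \<epsilon>" "\<epsilon> < g 0" and d: "0 < d" "d \<le> pi"
    and gd: "\<forall>t\<in>{-pi..pi}. \<bar>t\<bar> < d \<longrightarrow> g 0 - \<epsilon> \<le> g t \<and> sq u t \<le> 1 + \<epsilon>"
    and m: "C * ((1 + cos d)/2)^m \<le> \<epsilon>"
  shows "sigma2 f (n + (K + m)) \<le> ((1 + \<epsilon>)/(g 0 - \<epsilon>) + \<epsilon>) * sigma2 (\<lambda>t. f t * g t) n"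
proof -
  define A where "A = (1 + \<epsilon>)/(g 0 - \<epsilon>) + \<epsilon>"
  have A0: "A > 0" unfolding A_def using eps by (intro add_pos_pos divide_pos_pos) auto
  have fi: "set_integrable lborel {-pi..pi} f" and fn: "\<forall>t\<in>{-pi..pi}. f t \<ge> 0" using f by (auto simp: wt_def)
  have wfg: "wt (\<lambda>t. f t * g t)" by (rule wt_mult[OF f gm gb])
  have key: "sq u t * (sq v1 t)^m \<le> A * g t" if t: "t \<in> {-pi..pi}" for t
  proof -
    have x0: "0 \<le> sq v1 t" and x1: "sq v1 t \<le> 1" using sq_v1_bounds by auto
    have xm: "(sq v1 t)^m \<le> 1" using x0 x1 by (simp add: power_le_one)
    have gt0: "g t \<ge> 0" using gb t by auto
    show ?thesis
    proof (cases "\<bar>t\<bar> < d")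
      case True
      then have g1: "g 0 - \<epsilon> \<le> g t" and u1: "sq u t \<le> 1 + \<epsilon>" using gd t by auto
      have "sq u t * (sq v1 t)^m \<le> (1 + \<epsilon>) * 1"
        using u1 xm x0 eps by (intro mult_mono) auto
      also have "\<dots> = (1 + \<epsilon>)/(g 0 - \<epsilon>) * (g 0 - \<epsilon>)" using eps by simp
      also have "\<dots> \<le> (1 + \<epsilon>)/(g 0 - \<epsilon>) * g t" using g1 eps by (intro mult_left_mono) auto
      also have "\<dots> \<le> A * g t" unfolding A_def using gt0 eps by (simp add: distrib_right)
      finally show ?thesis .
    next
      case False
      then have "cos t \<le> cos d" using cos_ge_delta[OF d t] by simp
      then have "sq v1 t \<le> (1 + cos d)/2" by (simp add: sq_v1)
      then have "(sq v1 t)^m \<le> ((1 + cos d)/2)^m" using x0 by (rule power_mono)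
      then have "sq u t * (sq v1 t)^m \<le> (C * g t) * ((1 + cos d)/2)^m"
        using u(3) t x0 u(2) gt0 by (intro mult_mono) auto
      also have "\<dots> = g t * (C * ((1 + cos d)/2)^m)" by simp
      also have "\<dots> \<le> g t * \<epsilon>" using m gt0 by (intro mult_left_mono) auto
      also have "\<dots> \<le> A * g t" unfolding A_def using gt0 eps by (simp add: distrib_right)
      finally show ?thesis .
    qed
  qed
  have "sigma2 f (n + (K + m)) / A \<le> sigma2 (\<lambda>t. f t * g t) n"
  proof (rule sigma_ge)
    fix q assume q: "q \<in> Qn1 n"
    have wQ: "q * (u * v1 ^ m) \<in> Qn1 (n + (K + m))"
      using Qn1_mult[OF q Qn1_mult[OF u(1) Qn1_power[OF v1_Qn1, of m]]] by simp
    have "sigma2 f (n + (K + m)) \<le> qform (q * (u * v1 ^ m)) f" by (rule sigma_le[OF f wQ])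
    also have "\<dots> \<le> (LINT t:{-pi..pi}|lborel. A * (sq q t * (f t * g t)))"
      unfolding qform_sq
    proof (rule set_integral_mono)
      show "set_integrable lborel {-pi..pi} (\<lambda>t. sq (q * (u * v1 ^ m)) t * f t)" by (rule qint[OF fi])
      show "set_integrable lborel {-pi..pi} (\<lambda>t. A * (sq q t * (f t * g t)))"
        using qint wfg by (auto simp: wt_def)
      fix t assume t: "t \<in> {-pi..pi}"
      have nn: "0 \<le> sq q t * f t" using fn t by simp
      have "sq (q * (u * v1 ^ m)) t * f t = (sq u t * (sq v1 t)^m) * (sq q t * f t)"
        by (simp add: sq_mult sq_power)
      also have "\<dots> \<le> (A * g t) * (sq q t * f t)" by (rule mult_right_mono[OF key[OF t] nn])
      also have "\<dots> = A * (sq q t * (f t * g t))" by simp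
      finally show "sq (q * (u * v1 ^ m)) t * f t \<le> A * (sq q t * (f t * g t))" .
    qed
    also have "\<dots> = A * qform q (\<lambda>t. f t * g t)" by (simp add: qform_sq)
    finally show "sigma2 f (n + (K + m)) / A \<le> qform q (\<lambda>t. f t * g t)"
      using A0 by (simp add: field_simps)
  qed
  then show ?thesis using A0 unfolding A_def[symmetric] by (simp add: field_simps)
qed

lemma ratio_shift:
  assumes wv: "(\<lambda>n. s (Suc n) / s n) \<longlonglongrightarrow> 1" and sp: "\<And>n. s n > (0::real)"
  shows "(\<lambda>n. s (n + L) / s n) \<longlonglongrightarrow> 1"
proof (induction L)
  case 0
  then show ?case using sp by (simp add: less_imp_neq[symmetric])
next
  case (Suc L)
  have a: "(\<lambda>n. s (Suc (n + L)) / s (n + L)) \<longlonglongrightarrow> 1"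
    using LIMSEQ_ignore_initial_segment[OF wv, of L] by simp
  have "(\<lambda>n. s (Suc (n + L)) / s (n + L) * (s (n + L) / s n)) \<longlonglongrightarrow> 1 * 1"
    by (rule tendsto_mult[OF a Suc.IH])
  moreover have "(\<lambda>n. s (Suc (n + L)) / s (n + L) * (s (n + L) / s n)) = (\<lambda>n. s (n + Suc L) / s n)"
  proof
    fix n
    have "s (n + L) \<noteq> 0" "s n \<noteq> 0" using sp[of "n + L"] sp[of n] by auto
    then show "s (Suc (n + L)) / s (n + L) * (s (n + L) / s n) = s (n + Suc L) / s n" by simp
  qed
  ultimately show ?case by simp
qed

lemma isCont_eps:
  fixes \<phi> :: "real \<Rightarrow> real"
  assumes "isCont \<phi> 0" "e > 0"
  shows "\<exists>d>0. \<forall>t. \<bar>t\<bar> < d \<longrightarrow> \<bar>\<phi> t - \<phi> 0\<bar> < e"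
proof -
  from assms obtain d where "d > 0" "\<forall>x. x \<noteq> 0 \<and> norm (x - 0) < d \<longrightarrow> norm (\<phi> x - \<phi> 0) < e"
    unfolding isCont_def LIM_eq by blast
  then show ?thesis using assms(2) by (metis abs_zero cancel_comm_monoid_add_class.diff_cancel diff_zero real_norm_def)
qed

lemma upper_lim:
  assumes f: "wt f" "(LINT t:{-pi..pi}|lborel. f t) > 0"
    and wv: "(\<lambda>n. sigma2 f (Suc n) / sigma2 f n) \<longlonglongrightarrow> 1"
    and gb: "\<forall>t\<in>{-pi..pi}. 0 \<le> g t \<and> g t \<le> M"
    and gm: "set_borel_measurable lborel {-pi..pi} g"
    and gc: "\<forall>e>0. \<exists>d>0. \<forall>t\<in>{-pi..pi}. \<bar>t\<bar> < d \<longrightarrow> \<bar>g t - g 0\<bar> < e"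
    and e: "e > 0"
  shows "eventually (\<lambda>n. qform (optpoly f n) (\<lambda>t. f t * g t) / sigma2 f n < g 0 + e) sequentially"
proof -
  obtain d0 where d0: "d0 > 0" "\<forall>t\<in>{-pi..pi}. \<bar>t\<bar> < d0 \<longrightarrow> \<bar>g t - g 0\<bar> < e/2"
    using gc e by (meson half_gt_zero)
  define d where "d = min d0 pi"
  have d: "0 < d" "d \<le> pi" using d0 pi_gt_zero by (auto simp: d_def)
  have gd: "\<forall>t\<in>{-pi..pi}. \<bar>t\<bar> < d \<longrightarrow> g t \<le> g 0 + e/2"
  proof (intro ballI impI)
    fix t assume t: "t \<in> {-pi..pi}" "\<bar>t\<bar> < d"
    then have "\<bar>t\<bar> < d0" by (simp add: d_def)
    then have "\<bar>g t - g 0\<bar> < e/2" using d0(2) t(1) by blast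
    then show "g t \<le> g 0 + e/2" by linarith
  qed
  define K where "K = M / ((1 - cos d)/2)"
  have sp: "sigma2 f n > 0" for n by (rule sigma_pos[OF f])
  have b: "qform (optpoly f n) (\<lambda>t. f t * g t) / sigma2 f n \<le> g 0 + e/2 + K * (1 - sigma2 f (Suc n) / sigma2 f n)" for n
  proof -
    have "qform (optpoly f n) (\<lambda>t. f t * g t) \<le> (g 0 + e/2) * sigma2 f n + K * (sigma2 f n - sigma2 f (Suc n))"
      unfolding K_def using e by (intro stepB[OF f gb gm d _ gd]) auto
    then show ?thesis using sp[of n] by (simp add: field_simps)
  qed
  have "(\<lambda>n. K * (1 - sigma2 f (Suc n) / sigma2 f n)) \<longlonglongrightarrow> K * (1 - 1)"
    by (intro tendsto_intros wv)
  then have "eventually (\<lambda>n. K * (1 - sigma2 f (Suc n) / sigma2 f n) < e/2) sequentially"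
    using e by (intro order_tendstoD(2)) auto
  then show ?thesis
  proof eventually_elim
    case (elim n) then show ?case using b[of n] by linarith
  qed
qed

lemma lower_lim:
  assumes f: "wt f" "(LINT t:{-pi..pi}|lborel. f t) > 0"
    and wv: "(\<lambda>n. sigma2 f (Suc n) / sigma2 f n) \<longlonglongrightarrow> 1"
    and gb: "\<forall>t\<in>{-pi..pi}. 0 \<le> g t \<and> g t \<le> M"
    and gm: "set_borel_measurable lborel {-pi..pi} g"
    and gc: "\<forall>e>0. \<exists>d>0. \<forall>t\<in>{-pi..pi}. \<bar>t\<bar> < d \<longrightarrow> \<bar>g t - g 0\<bar> < e"
    and u: "u \<in> Qn1 K" "C > 0" "\<forall>t\<in>{-pi..pi}. sq u t \<le> C * g t"
    and g0: "g 0 > 0" and e: "e > 0"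
  shows "eventually (\<lambda>n. g 0 - e < sigma2 (\<lambda>t. f t * g t) n / sigma2 f n) sequentially"
proof -
  define F where "F = (\<lambda>x::real. 1 / ((1 + x)/(g 0 - x) + x))"
  have "(F \<longlongrightarrow> 1 / ((1 + 0)/(g 0 - 0) + 0)) (at_right 0)"
    unfolding F_def using g0 by (intro tendsto_intros) auto
  then have "(F \<longlongrightarrow> g 0) (at_right 0)" by simp
  then have "eventually (\<lambda>x. F x > g 0 - e/2) (at_right 0)"
    using e by (intro order_tendstoD(1)) auto
  then obtain b where b: "b > 0" "\<And>y. y > 0 \<Longrightarrow> y < b \<Longrightarrow> F y > g 0 - e/2"
    unfolding eventually_at_right_field by auto
  define \<epsilon> where "\<epsilon> = min (b/2) (g 0/2)"
  have eps: "0 < \<epsilon>" "\<epsilon> < g 0" "\<epsilon> < b" using b g0 by (auto simp: \<epsilon>_def)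
  have Feps: "F \<epsilon> > g 0 - e/2" using b eps by auto
  obtain d1 where d1: "d1 > 0" "\<forall>t\<in>{-pi..pi}. \<bar>t\<bar> < d1 \<longrightarrow> \<bar>g t - g 0\<bar> < \<epsilon>"
    using gc eps by blast
  have "isCont (sq u) 0" using sq_cont[of u] by (simp add: continuous_on_eq_continuous_at)
  then obtain d2 where d2: "d2 > 0" "\<forall>t. \<bar>t\<bar> < d2 \<longrightarrow> \<bar>sq u t - sq u 0\<bar> < \<epsilon>"
    using isCont_eps eps by blast
  have su0: "sq u 0 = 1" using u(1) by (simp add: sq_def Qn1_def)
  define d where "d = min (min d1 d2) pi"
  have d: "0 < d" "d \<le> pi" using d1 d2 pi_gt_zero by (auto simp: d_def)
  have gd: "\<forall>t\<in>{-pi..pi}. \<bar>t\<bar> < d \<longrightarrow> g 0 - \<epsilon> \<le> g t \<and> sq u t \<le> 1 + \<epsilon>"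
  proof (intro ballI impI)
    fix t assume t: "t \<in> {-pi..pi}" "\<bar>t\<bar> < d"
    then have "\<bar>t\<bar> < d1" "\<bar>t\<bar> < d2" by (auto simp: d_def)
    then have "\<bar>g t - g 0\<bar> < \<epsilon>" "\<bar>sq u t - sq u 0\<bar> < \<epsilon>" using d1(2) d2(2) t(1) by blast+
    then show "g 0 - \<epsilon> \<le> g t \<and> sq u t \<le> 1 + \<epsilon>" using su0 by linarith
  qed
  define y where "y = (1 + cos d)/2"
  have cd: "cos d < 1"
  proof -
    have "cos d < cos 0" using d by (intro cos_monotone_0_pi) auto
    then show ?thesis by simp
  qed
  have cm: "-1 \<le> cos d" by simp
  have cm2: "0 \<le> 1 + cos d" "1 + cos d < 2" using cm cd by linarith+
  have y: "0 \<le> y" "y < 1" unfolding y_def using cm2 by auto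
  have "(\<lambda>m. y ^ m) \<longlonglongrightarrow> 0" using y by (intro LIMSEQ_power_zero) auto
  then have "eventually (\<lambda>m. y ^ m < \<epsilon> / C) sequentially"
    using eps u(2) by (intro order_tendstoD(2)) auto
  then obtain m where "y ^ m < \<epsilon> / C" using eventually_sequentially by (metis order.refl)
  then have m: "C * ((1 + cos d)/2)^m \<le> \<epsilon>" using u(2) unfolding y_def by (simp add: field_simps)
  define L where "L = K + m"
  define A where "A = (1 + \<epsilon>)/(g 0 - \<epsilon>) + \<epsilon>"
  have A0: "A > 0" unfolding A_def using eps by (intro add_pos_pos divide_pos_pos) auto
  have FA: "F \<epsilon> = 1 / A" by (simp add: F_def A_def)
  have sp: "sigma2 f n > 0" for n by (rule sigma_pos[OF f])
  have C: "sigma2 f (n + L) / A \<le> sigma2 (\<lambda>t. f t * g t) n" for n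
    using stepC[OF f(1) gb gm u eps(1,2) d gd m, of n] A0 unfolding L_def A_def[symmetric]
    by (simp add: field_simps)
  have "(\<lambda>n. sigma2 f (n + L) / sigma2 f n / A) \<longlonglongrightarrow> 1 / A"
    by (intro tendsto_divide ratio_shift[OF wv sp] tendsto_const) (use A0 in auto)
  moreover have "1 / A > g 0 - e" using Feps FA e by simp
  ultimately have "eventually (\<lambda>n. sigma2 f (n + L) / sigma2 f n / A > g 0 - e) sequentially"
    by (rule order_tendstoD(1))
  then show ?thesis
  proof eventually_elim
    case (elim n)
    have "sigma2 f (n + L) / sigma2 f n / A = (sigma2 f (n + L) / A) / sigma2 f n" by simp
    also have "\<dots> \<le> sigma2 (\<lambda>t. f t * g t) n / sigma2 f n"
      using C[of n] sp[of n] by (intro divide_right_mono) auto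
    finally show ?case using elim by linarith
  qed
qed

lemma lim_by_bounds:
  assumes "\<And>e. e > 0 \<Longrightarrow> eventually (\<lambda>n. X n < l + e) sequentially"
    and "\<And>e. e > 0 \<Longrightarrow> eventually (\<lambda>n. l - e < X n) sequentially"
  shows "X \<longlonglongrightarrow> (l::real)"
proof (rule order_tendstoI)
  fix a assume "a < l"
  then have "eventually (\<lambda>n. l - (l - a) < X n) sequentially" by (intro assms(2)) auto
  then show "eventually (\<lambda>n. a < X n) sequentially" by simp
next
  fix a assume "a > l"
  then have "eventually (\<lambda>n. X n < l + (a - l)) sequentially" by (intro assms(1)) auto
  then show "eventually (\<lambda>n. X n < a) sequentially" by simp
qed

lemma abstract_main:
  assumes f: "wt f" "(LINT t:{-pi..pi}|lborel. f t) > 0"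
    and wv: "(\<lambda>n. sigma2 f (Suc n) / sigma2 f n) \<longlonglongrightarrow> 1"
    and gb: "\<forall>t\<in>{-pi..pi}. 0 \<le> g t \<and> g t \<le> M"
    and gm: "set_borel_measurable lborel {-pi..pi} g"
    and gc: "\<forall>e>0. \<exists>d>0. \<forall>t\<in>{-pi..pi}. \<bar>t\<bar> < d \<longrightarrow> \<bar>g t - g 0\<bar> < e"
    and gu: "g 0 > 0 \<Longrightarrow> \<exists>u K C. u \<in> Qn1 K \<and> C > 0 \<and> (\<forall>t\<in>{-pi..pi}. sq u t \<le> C * g t)"
  shows "(\<lambda>n. sigma2 (\<lambda>t. f t * g t) n / sigma2 f n) \<longlonglongrightarrow> g 0
       \<and> (g 0 > 0 \<longrightarrow>
          (\<lambda>n. sigma2 (\<lambda>t. f t * g t) n / qform (optpoly f n) (\<lambda>t. f t * g t)) \<longlonglongrightarrow> 1)"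
proof -
  have sp: "sigma2 f n > 0" for n by (rule sigma_pos[OF f])
  have wfg: "wt (\<lambda>t. f t * g t)" by (rule wt_mult[OF f(1) gm gb])
  have tle: "sigma2 (\<lambda>t. f t * g t) n \<le> qform (optpoly f n) (\<lambda>t. f t * g t)" for n
    using optpoly_prop[OF f, of n] by (intro sigma_le[OF wfg]) auto
  have rle: "sigma2 (\<lambda>t. f t * g t) n / sigma2 f n \<le> qform (optpoly f n) (\<lambda>t. f t * g t) / sigma2 f n" for n
    using tle[of n] sp[of n] by (intro divide_right_mono) auto
  have up: "eventually (\<lambda>n. qform (optpoly f n) (\<lambda>t. f t * g t) / sigma2 f n < g 0 + e) sequentially"
    if "e > 0" for e by (rule upper_lim[OF f wv gb gm gc that])
  have lo: "eventually (\<lambda>n. g 0 - e < sigma2 (\<lambda>t. f t * g t) n / sigma2 f n) sequentially"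
    if e: "e > 0" for e
  proof (cases "g 0 > 0")
    case True
    then obtain u K C where u: "u \<in> Qn1 K" "C > 0" "\<forall>t\<in>{-pi..pi}. sq u t \<le> C * g t" using gu by blast
    show ?thesis by (rule lower_lim[OF f wv gb gm gc u True e])
  next
    case False
    then have "g 0 = 0" using gb[rule_format, of 0] by auto
    have nn: "sigma2 (\<lambda>t. f t * g t) n / sigma2 f n \<ge> 0" for n
      using sigma_nonneg[OF wfg, of n] sp[of n] by simp
    show ?thesis
    proof (intro always_eventually allI)
      fix n show "g 0 - e < sigma2 (\<lambda>t. f t * g t) n / sigma2 f n"
        using nn[of n] \<open>g 0 = 0\<close> e by linarith
    qed
  qed
  have L1: "(\<lambda>n. sigma2 (\<lambda>t. f t * g t) n / sigma2 f n) \<longlonglongrightarrow> g 0"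
  proof (rule lim_by_bounds)
    fix e :: real assume "e > 0"
    from up[OF this] show "eventually (\<lambda>n. sigma2 (\<lambda>t. f t * g t) n / sigma2 f n < g 0 + e) sequentially"
      by eventually_elim (use rle in \<open>smt (verit)\<close>)
  qed (rule lo)
  have L2: "(\<lambda>n. qform (optpoly f n) (\<lambda>t. f t * g t) / sigma2 f n) \<longlonglongrightarrow> g 0"
  proof (rule lim_by_bounds)
    fix e :: real assume "e > 0"
    from lo[OF this] show "eventually (\<lambda>n. g 0 - e < qform (optpoly f n) (\<lambda>t. f t * g t) / sigma2 f n) sequentially"
      by eventually_elim (use rle in \<open>smt (verit)\<close>)
  qed (rule up)
  have "(\<lambda>n. sigma2 (\<lambda>t. f t * g t) n / qform (optpoly f n) (\<lambda>t. f t * g t)) \<longlonglongrightarrow> 1" if g0: "g 0 > 0"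
  proof -
    have T: "(\<lambda>n. (sigma2 (\<lambda>t. f t * g t) n / sigma2 f n) / (qform (optpoly f n) (\<lambda>t. f t * g t) / sigma2 f n))
        \<longlonglongrightarrow> g 0 / g 0"
      by (rule tendsto_divide[OF L1 L2]) (use g0 in simp)
    have eq: "(\<lambda>n. (sigma2 (\<lambda>t. f t * g t) n / sigma2 f n) / (qform (optpoly f n) (\<lambda>t. f t * g t) / sigma2 f n))
        = (\<lambda>n. sigma2 (\<lambda>t. f t * g t) n / qform (optpoly f n) (\<lambda>t. f t * g t))"
    proof
      fix n show "(sigma2 (\<lambda>t. f t * g t) n / sigma2 f n) / (qform (optpoly f n) (\<lambda>t. f t * g t) / sigma2 f n)
        = sigma2 (\<lambda>t. f t * g t) n / qform (optpoly f n) (\<lambda>t. f t * g t)"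
      using sp[of n] by (simp add: divide_divide_eq_left')
    qed
    show ?thesis using T g0 unfolding eq by simp
  qed
  with L1 show ?thesis by blast
qed



lemma cis_dist1: "cmod (cis x - 1) \<le> \<bar>x\<bar>"
proof -
  have "(cmod (cis x - 1))^2 = (cos x - 1)^2 + (sin x)^2" by (simp add: cmod_power2)
  also have "\<dots> = 2 - 2 * cos x"
  proof -
    have "(sin x)^2 = 1 - (cos x)^2" using sin_cos_squared_add[of x] by linarith
    then show ?thesis by (simp add: power2_eq_square algebra_simps)
  qed
  also have "\<dots> = 4 * (sin (x/2))^2" using cos_double_sin[of "x/2"] by simp
  also have "\<dots> \<le> 4 * (x/2)^2"
  proof -
    have "\<bar>sin (x/2)\<bar> \<le> \<bar>x/2\<bar>" by (rule abs_sin_x_le_abs_x)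
    then have "\<bar>sin (x/2)\<bar>^2 \<le> \<bar>x/2\<bar>^2" by (rule power_mono) simp
    then show ?thesis by (simp add: power_divide)
  qed
  also have "\<dots> = \<bar>x\<bar>^2" by (simp add: power2_eq_square)
  finally show ?thesis by (rule power2_le_imp_le) simp
qed

lemma cis_dist: "cmod (cis t - cis l) \<le> \<bar>t - l\<bar>"
proof -
  have "cis l * cis (t - l) = cis t" by (simp add: cis_mult)
  then have "cis t - cis l = cis l * (cis (t - l) - 1)" by (simp add: right_diff_distrib)
  then have "cmod (cis t - cis l) = cmod (cis (t - l) - 1)" by (simp add: norm_mult)
  then show ?thesis using cis_dist1 by simp
qed

lemma cis_eq_1:
  assumes "x \<in> {-pi..pi}" "cis x = 1" shows "x = 0"
proof -
  have "Re (cis x) = 1" using assms(2) by simp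
  then have "cos x = 1" by simp
  then have c: "cos \<bar>x\<bar> = cos 0" by (cases "x \<ge> 0") auto
  have xp: "\<bar>x\<bar> \<le> pi" using assms(1) by auto
  have "\<bar>x\<bar> = 0" by (rule cos_inj_pi[OF abs_ge_zero xp order.refl pi_ge_zero c])
  then show ?thesis by simp
qed

lemma rpow_nonneg: "rpow x a \<ge> 0"
  by (simp add: rpow_def)

lemma rpow_le:
  assumes "0 \<le> x" "x \<le> X" "a \<ge> 0"
  shows "rpow x a \<le> (X + 1) powr a"
proof (cases "a = 0")
  case True
  have "X + 1 \<noteq> 0" using assms by linarith
  then show ?thesis using True by (simp add: rpow_def)
next
  case False
  then have "x powr a \<le> (X + 1) powr a" using assms by (intro powr_mono2) auto
  then show ?thesis using False by (simp add: rpow_def)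
qed

lemma rpow_cont:
  assumes "a \<ge> 0"
  shows "continuous_on UNIV (\<lambda>t. rpow \<bar>t - l\<bar> a)"
proof (cases "a = 0")
  case True then show ?thesis by (simp add: rpow_def)
next
  case False
  have "continuous_on UNIV (\<lambda>t. \<bar>t - l\<bar> powr a)"
    using False assms by (intro continuous_on_powr' continuous_intros) auto
  then show ?thesis using False by (simp add: rpow_def)
qed

lemma setm_cong:
  assumes "\<forall>t\<in>{-pi..pi}. a t = b t" "set_borel_measurable lborel {-pi..pi} a"
  shows "set_borel_measurable lborel {-pi..pi} (b :: real \<Rightarrow> real)"
proof -
  have "(\<lambda>t. indicator {-pi..pi} t *\<^sub>R a t) = (\<lambda>t. indicator {-pi..pi} t *\<^sub>R b t)"
    using assms(1) by (auto simp: indicator_def)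
  then show ?thesis using assms(2) unfolding set_borel_measurable_def by simp
qed

lemma rpow_bound_poly:
  assumes a: "a \<ge> 0" and d: "0 \<le> x" "x \<le> X" and c: "c \<le> x" "0 \<le> c"
  shows "c ^ (2 * nat \<lceil>a\<rceil>) \<le> (X + 1) powr (2 * real (nat \<lceil>a\<rceil>) - a) * rpow x a"
proof (cases "a = 0")
  case True
  have "X + 1 \<noteq> 0" using d by linarith
  then show ?thesis using True by (simp add: rpow_def)
next
  case False
  then have a0: "a > 0" using a by simp
  define k where "k = nat \<lceil>a\<rceil>"
  have k1: "k \<ge> 1" using a0 unfolding k_def by linarith
  have ka: "real k \<ge> a" unfolding k_def by linarith
  have "c ^ (2 * k) \<le> x ^ (2 * k)" using c by (intro power_mono) auto
  also have "\<dots> \<le> (X + 1) powr (2 * real k - a) * x powr a"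
  proof (cases "x = 0")
    case True then show ?thesis using k1 by (simp add: power_0_left)
  next
    case False
    then have xp: "x > 0" using d by simp
    have "x ^ (2 * k) = x powr (real (2 * k))" by (rule powr_realpow[OF xp, symmetric])
    also have "\<dots> = x powr (2 * real k - a) * x powr a" using xp by (simp add: powr_add[symmetric])
    also have "\<dots> \<le> (X + 1) powr (2 * real k - a) * x powr a"
      using ka d xp by (intro mult_right_mono powr_mono2) auto
    finally show ?thesis .
  qed
  finally show ?thesis using False by (simp add: rpow_def k_def)
qed

theorem theorem5p12:
  fixes f h g :: "real \<Rightarrow> real" and r :: nat and lam alpha :: "nat \<Rightarrow> real"
  assumes f_nonneg: "\<forall>t\<in>{-pi..pi}. f t \<ge> 0"
    and f_int: "set_integrable lborel {-pi..pi} f"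
    and f_pos: "(LINT t:{-pi..pi}|lborel. f t) > 0"
    and weakly_varying: "(\<lambda>n. sigma2 f (Suc n) / sigma2 f n) \<longlonglongrightarrow> 1"
    and lam_range: "\<forall>i<r. lam i \<in> {-pi..pi}"
    and alpha_nonneg: "\<forall>i<r. alpha i \<ge> 0"
    and h_meas: "set_borel_measurable lborel {-pi..pi} h"
    and h_bounded: "\<exists>M. \<forall>t\<in>{-pi..pi}. \<bar>h t\<bar> \<le> M"
    and h_cont: "isCont h 0"
    and h_lower: "\<exists>c>0. \<forall>t\<in>{-pi..pi}. h t \<ge> c"
    and g_def: "\<forall>t\<in>{-pi..pi}. g t = h t * (\<Prod>i<r. rpow \<bar>t - lam i\<bar> (alpha i))"
  shows "(\<lambda>n. sigma2 (\<lambda>t. f t * g t) n / sigma2 f n) \<longlonglongrightarrow> g 0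
       \<and> (g 0 > 0 \<longrightarrow>
          (\<lambda>n. sigma2 (\<lambda>t. f t * g t) n / qform (optpoly f n) (\<lambda>t. f t * g t)) \<longlonglongrightarrow> 1)"
proof -
  obtain Mh where Mh: "\<forall>t\<in>{-pi..pi}. \<bar>h t\<bar> \<le> Mh" using h_bounded by blast
  obtain c where c: "c > 0" "\<forall>t\<in>{-pi..pi}. h t \<ge> c" using h_lower by blast
  have S0: "(0::real) \<in> {-pi..pi}" by simp
  have Mh0: "Mh \<ge> 0" using Mh[rule_format, OF S0] by simp
  define P where "P = (\<lambda>t. \<Prod>i<r. rpow \<bar>t - lam i\<bar> (alpha i))"
  have geq: "\<forall>t\<in>{-pi..pi}. g t = h t * P t" using g_def by (simp add: P_def)
  have Pc: "continuous_on UNIV P"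
    unfolding P_def by (intro continuous_on_prod rpow_cont) (use alpha_nonneg in auto)
  have P0: "P t \<ge> 0" for t unfolding P_def by (intro prod_nonneg) (simp add: rpow_nonneg)
  define PB where "PB = (\<Prod>i<r. (2 * pi + 1) powr alpha i)"
  have PB: "P t \<le> PB" if t: "t \<in> {-pi..pi}" for t
    unfolding P_def PB_def
  proof (intro prod_mono conjI)
    fix i assume i: "i \<in> {..<r}"
    show "0 \<le> rpow \<bar>t - lam i\<bar> (alpha i)" by (rule rpow_nonneg)
    have "\<bar>t - lam i\<bar> \<le> 2 * pi" using t lam_range i by auto
    then show "rpow \<bar>t - lam i\<bar> (alpha i) \<le> (2 * pi + 1) powr alpha i"
      using alpha_nonneg i by (intro rpow_le) auto
  qed
  have wf: "wt f" using f_nonneg f_int by (simp add: wt_def)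
  have gb: "\<forall>t\<in>{-pi..pi}. 0 \<le> g t \<and> g t \<le> Mh * PB"
  proof
    fix t assume t: "t \<in> {-pi..pi}"
    have h1: "h t \<ge> c" "h t \<le> Mh" using c(2) Mh[rule_format, OF t] t by (auto simp: abs_le_iff)
    have "0 \<le> h t * P t" using h1 c P0[of t] by simp
    moreover have "h t * P t \<le> Mh * PB" using h1 P0[of t] PB[OF t] Mh0 by (intro mult_mono) auto
    ultimately show "0 \<le> g t \<and> g t \<le> Mh * PB" using geq t by simp
  qed
  have gm: "set_borel_measurable lborel {-pi..pi} g"
    by (rule setm_cong[OF _ setm_mult[OF h_meas cont_setm[OF Pc]]]) (use geq in simp)
  have gc: "\<forall>e>0. \<exists>d>0. \<forall>t\<in>{-pi..pi}. \<bar>t\<bar> < d \<longrightarrow> \<bar>g t - g 0\<bar> < e"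
  proof (intro allI impI)
    fix e :: real assume e: "e > 0"
    have "isCont P 0" using Pc by (simp add: continuous_on_eq_continuous_at)
    then have "isCont (\<lambda>t. h t * P t) 0" using h_cont by (intro isCont_mult)
    then obtain d where d: "d > 0" "\<forall>t. \<bar>t\<bar> < d \<longrightarrow> \<bar>h t * P t - h 0 * P 0\<bar> < e"
      using isCont_eps[OF _ e] by blast
    then show "\<exists>d>0. \<forall>t\<in>{-pi..pi}. \<bar>t\<bar> < d \<longrightarrow> \<bar>g t - g 0\<bar> < e"
      using geq S0 by (metis (no_types, lifting))
  qed
  have gu: "\<exists>u K C. u \<in> Qn1 K \<and> C > 0 \<and> (\<forall>t\<in>{-pi..pi}. sq u t \<le> C * g t)" if g0: "g 0 > 0"
  proof -
    have nz: "lam i \<noteq> 0" if i: "i < r" "alpha i > 0" for i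
    proof
      assume l0: "lam i = 0"
      have "P 0 = 0" unfolding P_def
        by (rule prod_zero) (use i l0 in \<open>auto simp: rpow_def intro!: bexI[of _ i]\<close>)
      then have "g 0 = 0" using geq S0 by simp
      with g0 show False by simp
    qed
    define k where "k i = nat \<lceil>alpha i\<rceil>" for i
    define u0 where "u0 = (\<Prod>i<r. [:- cis (lam i), 1:] ^ k i)"
    have pu0: "poly u0 z = (\<Prod>i<r. (z - cis (lam i)) ^ k i)" for z
      by (simp add: u0_def poly_prod)
    have fac: "(1 - cis (lam i)) ^ k i \<noteq> 0" if i: "i < r" for i
    proof (cases "k i = 0")
      case False
      then have "alpha i > 0" unfolding k_def by linarith
      then have "lam i \<noteq> 0" using nz i by auto
      then have "cis (lam i) \<noteq> 1" using cis_eq_1 lam_range i by auto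
      then show ?thesis by simp
    qed simp
    have u01: "poly u0 1 \<noteq> 0"
      unfolding pu0 using fac by (subst prod_zero_iff) auto
    define u where "u = smult (inverse (poly u0 1)) u0"
    define K where "K = (\<Sum>i<r. k i)"
    have du0: "degree u0 \<le> K"
    proof -
      have "degree u0 \<le> (\<Sum>i<r. degree ([:- cis (lam i), 1:] ^ k i))"
        unfolding u0_def using degree_prod_sum_le[of "{..<r}" "\<lambda>i. [:- cis (lam i), 1:] ^ k i"] by (simp add: comp_def)
      also have "\<dots> \<le> K" unfolding K_def
      proof (rule sum_mono)
        fix i
        show "degree ([:- cis (lam i), 1:] ^ k i) \<le> k i"
          using degree_power_le[of "[:- cis (lam i), 1:]" "k i"] by simp
      qed
      finally show ?thesis .
    qed
    have uQ: "u \<in> Qn1 K" using du0 u01 by (simp add: u_def Qn1_def)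
    define D where "D i = (2 * pi + 1) powr (2 * real (nat \<lceil>alpha i\<rceil>) - alpha i)" for i
    define C where "C = (\<Prod>i<r. D i) / ((cmod (poly u0 1))^2 * c)"
    have "2 * pi + 1 \<noteq> (0::real)" using pi_gt_zero by linarith
    then have Dpos: "D i > 0" for i unfolding D_def by simp
    have Cpos: "C > 0" unfolding C_def using Dpos u01 c by (intro divide_pos_pos prod_pos mult_pos_pos) auto
    have squ: "sq u t = (\<Prod>i<r. (cmod (cis t - cis (lam i))) ^ (2 * k i)) / (cmod (poly u0 1))^2" for t
    proof -
      have "sq u t = (cmod (poly u0 (cis t)) / cmod (poly u0 1))^2"
        by (simp add: sq_def u_def norm_mult norm_inverse divide_inverse)
      also have "cmod (poly u0 (cis t)) = (\<Prod>i<r. (cmod (cis t - cis (lam i))) ^ k i)"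
        unfolding pu0 by (simp add: prod_norm[symmetric] norm_power)
      finally show ?thesis by (simp add: power_divide prod_power_distrib power_mult[symmetric] mult.commute)
    qed
    have "sq u t \<le> C * g t" if t: "t \<in> {-pi..pi}" for t
    proof -
      have "(\<Prod>i<r. (cmod (cis t - cis (lam i))) ^ (2 * k i)) \<le> (\<Prod>i<r. D i * rpow \<bar>t - lam i\<bar> (alpha i))"
      proof (rule prod_mono)
        fix i assume i: "i \<in> {..<r}"
        have "\<bar>t - lam i\<bar> \<le> 2 * pi" using t lam_range i by auto
        then show "0 \<le> (cmod (cis t - cis (lam i))) ^ (2 * k i) \<and>
            (cmod (cis t - cis (lam i))) ^ (2 * k i) \<le> D i * rpow \<bar>t - lam i\<bar> (alpha i)"
        proof -
          have ai: "alpha i \<ge> 0" using alpha_nonneg i by auto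
          have "(cmod (cis t - cis (lam i))) ^ (2 * nat \<lceil>alpha i\<rceil>)
              \<le> (2 * pi + 1) powr (2 * real (nat \<lceil>alpha i\<rceil>) - alpha i) * rpow \<bar>t - lam i\<bar> (alpha i)"
            by (rule rpow_bound_poly[OF ai abs_ge_zero \<open>\<bar>t - lam i\<bar> \<le> 2 * pi\<close> cis_dist norm_ge_zero])
          then show ?thesis unfolding k_def D_def by simp
        qed
      qed
      also have "\<dots> = (\<Prod>i<r. D i) * P t" by (simp add: P_def prod.distrib)
      finally have 1: "(\<Prod>i<r. (cmod (cis t - cis (lam i))) ^ (2 * k i)) \<le> (\<Prod>i<r. D i) * P t" .
      have "c * P t \<le> h t * P t" using c t P0[of t] by (intro mult_right_mono) auto
      then have 2: "P t \<le> g t / c" using geq t c(1) by (simp add: field_simps)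
      have "sq u t \<le> (\<Prod>i<r. D i) * P t / (cmod (poly u0 1))^2"
        unfolding squ using 1 u01 by (intro divide_right_mono) auto
      also have "\<dots> \<le> (\<Prod>i<r. D i) * (g t / c) / (cmod (poly u0 1))^2"
        using 2 Dpos by (intro divide_right_mono mult_left_mono prod_nonneg) (auto intro: less_imp_le)
      also have "\<dots> = C * g t" unfolding C_def by simp
      finally show ?thesis .
    qed
    with uQ Cpos show ?thesis by blast
  qed
  show ?thesis by (rule abstract_main[OF wf f_pos weakly_varying gb gm gc gu])
qed


end
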